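(* $\displaystyle\int_0^{\infty}\left[\sinh^{-1}(\cosh u) - u\right]\,du = \frac{\pi^2}{16}$.
   Context: $\sinh^{-1}$ denotes the real inverse hyperbolic sine, $\sinh^{-1}x = \ln\!\left(x+\sqrt{x^2+1}\right)$ for all real $x$. *)

theory Defs
  imports "HOL-Analysis.Analysis"
begin

end

theory Submission
  imports Defs "HOL-Real_Asymp.Real_Asymp"
begin


definition chi :: "real \<Rightarrow> real" where
  "chi x = (\<Sum>n. x^(2*n+1) / (2*real n+1)^2)"

lemma inv_sq_sums: "(\<lambda>n::nat. 1 / (real n + 1)^2) sums (pi^2/6)"
  using inverse_squares_sums by (simp only: of_nat_power of_nat_add of_nat_1)

lemma summable_inv_sq: "summable (\<lambda>n::nat. 1 / (real n + 1)^2)"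
  using inv_sq_sums sums_summable by blast

lemma chi_bound:
  assumes "\<bar>x\<bar> \<le> 1"
  shows "norm (x^(2*n+1) / (2*real n+1)^2) \<le> 1 / (real n + 1)^2"
proof -
  have "\<bar>x\<bar>^(2*n+1) \<le> 1" using assms by (intro power_le_one) auto
  hence a: "\<bar>x\<bar>^(2*n+1)/(2*real n+1)^2 \<le> 1/(2*real n+1)^2" by (rule divide_right_mono) auto
  have b: "1/(2*real n+1)^2 \<le> 1/(real n+1)^2"
    by (rule divide_left_mono) (auto intro!: power_mono)
  have "norm (x^(2*n+1) / (2*real n+1)^2) = \<bar>x\<bar>^(2*n+1) / (2*real n+1)^2"
    by (simp add: power_abs abs_mult)
  with a b show ?thesis by linarith
qed

lemma chi_uniform: "uniform_limit {-1..1} (\<lambda>n x. \<Sum>i<n. x^(2*i+1) / (2*real i+1)^2) chi sequentially"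
proof -
  have "uniform_limit {-1..1} (\<lambda>n x. \<Sum>i<n. x^(2*i+1) / (2*real i+1)^2) (\<lambda>x. suminf (\<lambda>i. x^(2*i+1) / (2*real i+1)^2)) sequentially"
    by (rule Weierstrass_m_test[OF _ summable_inv_sq]) (rule chi_bound, auto)
  then show ?thesis unfolding chi_def[abs_def] by simp
qed

lemma chi_cont: "continuous_on {-1..1} chi"
  by (rule uniform_limit_theorem[OF _ chi_uniform]) (intro eventuallyI continuous_intros, auto)

lemma chi_sums: "\<bar>x\<bar> \<le> 1 \<Longrightarrow> (\<lambda>n. x^(2*n+1) / (2*real n+1)^2) sums chi x"
  unfolding chi_def
  by (rule summable_sums, rule summable_comparison_test'[OF summable_inv_sq]) (use chi_bound in auto)

lemma chi_0: "chi 0 = 0" by (simp add: chi_def)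

lemma chi_1: "chi 1 = pi^2/8"
proof -
  have E: "(\<lambda>n. 1 / (2*real n+2)^2) sums (pi^2/24)"
  proof -
    have "(\<lambda>n. (1/4) * (1 / (real n + 1)^2)) sums ((1/4) * (pi^2/6))" by (rule sums_mult[OF inv_sq_sums])
    moreover have "(1/4) * (1 / (real n + 1)^2) = 1 / (2*real n+2)^2" for n
      by (simp add: field_simps power2_eq_square)
    ultimately show ?thesis by simp
  qed
  have O: "(\<lambda>n. 1 / (2*real n+1)^2) sums chi 1" using chi_sums[of 1] by simp
  have "(\<lambda>n. if even n then 1 / (2*real (n div 2)+1)^2 else 1 / (2*real ((n - 1) div 2)+2)^2) sums (pi^2/24 + chi 1)"
    by (rule sums_if[OF E O])
  moreover have "(\<lambda>n. if even n then 1 / (2*real (n div 2)+1)^2 else 1 / (2*real ((n - 1) div 2)+2)^2)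
      = (\<lambda>n. 1 / (real n + 1)^2)"
  proof
    fix n :: nat
    show "(if even n then 1 / (2*real (n div 2)+1)^2 else 1 / (2*real ((n - 1) div 2)+2)^2) = 1 / (real n + 1)^2"
    proof (cases "even n")
      case True then obtain k where "n = 2*k" by blast
      then show ?thesis by simp
    next
      case False then obtain k where "n = 2*k+1" using oddE by blast
      then show ?thesis by simp
    qed
  qed
  ultimately have "(\<lambda>n. 1 / (real n + 1)^2) sums (pi^2/24 + chi 1)" by simp
  with inv_sq_sums have "pi^2/24 + chi 1 = pi^2/6" using sums_unique2 by blast
  then show ?thesis by simp
qed



lemma artanh_sums:
  assumes "\<bar>x\<bar> < 1"
  shows "(\<lambda>n. x^(2*n+1) / (2*real n+1)) sums artanh x"
proof -
  define z where "z = (1+x)/(1-x)"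
  have z: "z > 0" using assms by (auto simp: z_def)
  have zx: "(z-1)/(z+1) = x" using assms by (simp add: z_def field_simps)
  have "(\<lambda>n. (2*((z - 1) / (z + 1)) ^ (2*n+1) / of_nat (2*n+1))) sums ln z"
    by (rule ln_series_quadratic[OF z])
  hence "(\<lambda>n. (2*x ^ (2*n+1) / of_nat (2*n+1))) sums ln z" unfolding zx .
  hence "(\<lambda>n. 2*x^(2*n+1) / (2*real n+1)) sums ln z"
    by (simp only: of_nat_add of_nat_mult of_nat_1 of_nat_numeral)
  hence "(\<lambda>n. 2*x^(2*n+1) / (2*real n+1) / 2) sums (ln z / 2)" by (rule sums_divide)
  moreover have "(\<lambda>n. 2*x^(2*n+1) / (2*real n+1) / 2) = (\<lambda>n. x^(2*n+1) / (2*real n+1))"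
    by (rule ext) (metis times_divide_eq_right nonzero_mult_div_cancel_left zero_neq_numeral)
  ultimately have "(\<lambda>n. x^(2*n+1) / (2*real n+1)) sums (ln z / 2)" by metis
  thus ?thesis unfolding artanh_def z_def .
qed

lemma chi_deriv:
  assumes "0 < x" "x < 1"
  shows "(chi has_field_derivative (artanh x / x)) (at x)"
proof -
  define r where "r = (1+x)/2"
  have r: "x < r" "r < 1" "0 < r" using assms by (auto simp: r_def)
  have der: "((\<lambda>y. y^(2*n+1) / (2*real n+1)^2) has_field_derivative (y^(2*n) / (2*real n+1))) (at y within {-r..r})" for n y
  proof -
    have "((\<lambda>y. y^(2*n+1) / (2*real n+1)^2) has_field_derivative (real (2*n+1) * y^(2*n) / (2*real n+1)^2)) (at y within {-r..r})"
      using DERIV_cdivide[OF DERIV_pow[of "2*n+1" y "{-r..r}"], of "(2*real n+1)^2"] by simp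
    moreover have "real (2*n+1) * y^(2*n) / (2*real n+1)^2 = (2*real n+1) * y^(2*n) / ((2*real n+1) * (2*real n+1))"
      by (simp only: power2_eq_square of_nat_add of_nat_mult of_nat_1 of_nat_numeral)
    moreover have "\<dots> = y^(2*n) / (2*real n+1)"
      by (rule mult_divide_mult_cancel_left) (smt (verit) of_nat_0_le_iff)
    ultimately show ?thesis by simp
  qed
  have bnd: "norm (y^(2*n) / (2*real n+1)) \<le> (r^2)^n" if "y \<in> {-r..r}" for n y
  proof -
    have "\<bar>y\<bar> \<le> r" using that by auto
    hence "\<bar>y\<bar>^(2*n) \<le> r^(2*n)" by (intro power_mono) auto
    moreover have "\<bar>y\<bar>^(2*n) / (2*real n+1) \<le> \<bar>y\<bar>^(2*n)"
      using divide_left_mono[of 1 "2*real n+1" "\<bar>y\<bar>^(2*n)"] by simp 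
    ultimately show ?thesis by (simp add: power_abs power_mult abs_mult)
  qed
  have "r*r < 1*1" using r by (intro mult_strict_mono) auto
  hence r2: "r^2 < 1" by (simp add: power2_eq_square)
  have uc: "uniformly_convergent_on {-r..r} (\<lambda>n y. \<Sum>i<n. y^(2*i) / (2*real i+1))"
    by (rule Weierstrass_m_test'[OF bnd]) (use r r2 in \<open>auto intro!: summable_geometric\<close>)
  have sm0: "summable (\<lambda>n. (0::real)^(2*n+1) / (2*real n+1)^2)" by simp
  have xi: "x \<in> interior {-r..r}" using r assms by auto
  have D: "((\<lambda>y. \<Sum>n. y^(2*n+1) / (2*real n+1)^2) has_field_derivative (\<Sum>n. x^(2*n) / (2*real n+1))) (at x)"
    by (rule has_field_derivative_series'(2)[OF _ der uc _ sm0 xi]) (use r in auto)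
  have "(\<lambda>n. x^(2*n+1) / (2*real n+1) / x) sums (artanh x / x)"
    by (rule sums_divide, rule artanh_sums) (use assms in auto)
  moreover have "x^(2*n+1) / (2*real n+1) / x = x^(2*n) / (2*real n+1)" for n
  proof -
    have "x * (2*real n+1) \<noteq> 0" "2*real n+1 \<noteq> 0" using assms by (auto simp: add_pos_pos)
    thus ?thesis using assms by (simp add: field_simps)
  qed
  ultimately have "(\<lambda>n. x^(2*n) / (2*real n+1)) sums (artanh x / x)" by simp
  hence "(\<Sum>n. x^(2*n) / (2*real n+1)) = artanh x / x" by (rule sums_unique[symmetric])
  with D show ?thesis unfolding chi_def[abs_def] by simp
qed



lemma chi_deriv_chain [derivative_intros]:
  assumes "(f has_field_derivative f') (at x within S)" "0 < f x" "f x < 1"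
  shows "((\<lambda>x. chi (f x)) has_field_derivative (artanh (f x) / f x * f')) (at x within S)"
  using DERIV_chain2[OF chi_deriv[OF assms(2,3)] assms(1)] .

lemma artanh_refl:
  fixes x :: real
  assumes "0 < x" "x < 1"
  shows "artanh ((1-x)/(1+x)) = - ln x / 2"
proof -
  have a: "1 + (1-x)/(1+x) = 2/(1+x)" using assms by (simp add: field_simps)
  have b: "1 - (1-x)/(1+x) = 2*x/(1+x)" using assms by (simp add: field_simps)
  have "(1 + (1-x)/(1+x)) / (1 - (1-x)/(1+x)) = 1/x"
  proof -
    have "x*2 + x*(x*2) \<noteq> 0" using assms by (smt (verit) mult_pos_pos)
    thus ?thesis unfolding a b using assms by (simp add: field_simps)
  qed
  thus ?thesis using assms by (simp add: artanh_def ln_div)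
qed

lemma landen_const:
  "\<exists>c. \<forall>x\<in>{0<..<1}. chi ((1-x)/(1+x)) + chi x - ln x * artanh x = c"
proof (rule has_field_derivative_zero_constant)
  fix x :: real assume x: "x \<in> {0<..<1}"
  have y: "0 < (1-x)/(1+x)" "(1-x)/(1+x) < 1" using x by auto
  have A: "artanh ((1-x)/(1+x)) = - ln x / 2" using x by (simp add: artanh_refl)
  show "((\<lambda>x. chi ((1-x)/(1+x)) + chi x - ln x * artanh x) has_field_derivative 0) (at x within {0<..<1})"
  proof -
    have D: "((\<lambda>x. chi ((1-x)/(1+x)) + chi x - ln x * artanh x) has_field_derivative
       (- (artanh ((1-x)/(1+x)) * 2 / ((1+x)*(1-x))) - ln x / (1 - x^2))) (at x within {0<..<1})"
      using x by (auto intro!: derivative_eq_intros)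
    have "- (artanh ((1-x)/(1+x)) * 2 / ((1+x)*(1-x))) - ln x / (1 - x^2) = 0"
      unfolding A using x by (simp add: field_simps power2_eq_square)
    with D show ?thesis by simp
  qed
qed auto

lemma landen:
  assumes "0 < x" "x < 1"
  shows "chi ((1-x)/(1+x)) + chi x - ln x * artanh x = pi^2/8"
proof -
  obtain c where c: "\<And>x. x \<in> {0<..<1} \<Longrightarrow> chi ((1-x)/(1+x)) + chi x - ln x * artanh x = c"
    using landen_const by blast
  have ev: "eventually (\<lambda>x. x \<in> {0<..<(1::real)}) (at_left 1)"
    by (rule eventually_at_left_real) simp
  have L1: "((\<lambda>x. chi ((1-x)/(1+x))) \<longlongrightarrow> chi ((1-1)/(1+1))) (at_left (1::real))"
    by (rule continuous_on_tendsto_compose[OF chi_cont])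
       (auto intro!: tendsto_eq_intros eventually_mono[OF ev] simp: le_divide_eq divide_le_eq)
  have L2: "(chi \<longlongrightarrow> chi 1) (at_left (1::real))"
    by (rule continuous_on_tendsto_compose[OF chi_cont, of "\<lambda>x. x", simplified])
       (auto intro!: tendsto_eq_intros eventually_mono[OF ev] simp: at_left_eq[symmetric])
  have L3: "((\<lambda>x. ln x * artanh x) \<longlongrightarrow> 0) (at_left (1::real))"
    unfolding artanh_def by real_asymp
  have "((\<lambda>x. chi ((1-x)/(1+x)) + chi x - ln x * artanh x) \<longlongrightarrow> chi 0 + chi 1 - 0) (at_left (1::real))"
    using L1 L2 L3 by (intro tendsto_diff tendsto_add) auto
  hence "((\<lambda>x. chi ((1-x)/(1+x)) + chi x - ln x * artanh x) \<longlongrightarrow> pi^2/8) (at_left (1::real))"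
    by (simp add: chi_0 chi_1)
  moreover have "((\<lambda>x. chi ((1-x)/(1+x)) + chi x - ln x * artanh x) \<longlongrightarrow> c) (at_left (1::real))"
    by (rule tendsto_eventually, rule eventually_mono[OF ev]) (use c in auto)
  ultimately have "c = pi^2/8" using tendsto_unique by (metis trivial_limit_at_left_real)
  with c assms show ?thesis by auto
qed



definition XX :: "real \<Rightarrow> real" where "XX u = exp (-(u + arsinh (cosh u)))"

lemma XX_facts:
  assumes "0 \<le> u"
  shows "0 < XX u" "XX u < 1" "artanh (XX u) = (arsinh (cosh u) - u) / 2"
proof -
  define v where "v = arsinh (cosh u)"
  have sv: "sinh v = cosh u" by (simp add: v_def)
  have "0 < cosh u" by simp
  hence v0: "0 < v" unfolding v_def using arsinh_less_iff_real[of 0 "cosh u"] by simp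
  define a where "a = exp u"
  define b where "b = exp v"
  have a0: "a > 0" and b0: "b > 0" by (auto simp: a_def b_def)
  have a1: "a \<ge> 1" using assms by (simp add: a_def)
  have b1: "b > 1" using v0 by (simp add: b_def)
  have rel: "b - 1/b = a + 1/a"
    using sv by (simp add: sinh_def cosh_def exp_minus a_def b_def field_simps)
  have X: "XX u = 1/(a*b)" by (simp add: XX_def v_def[symmetric] a_def b_def exp_add[symmetric] exp_minus field_simps)
  have "a*b \<ge> 1*b" using a1 b0 by (intro mult_right_mono) auto
  hence ab: "a*b > 1" using b1 by linarith
  show "0 < XX u" by (simp add: XX_def)
  show "XX u < 1" unfolding X using ab by simp
  have rel2: "a*b*b - a*a*b = a + b" using rel a0 b0 by (simp add: field_simps)
  have "(1 + XX u) / (1 - XX u) = b / a"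
  proof -
    have gen: "\<And>p::real. p > 1 \<Longrightarrow> (1 + 1/p)/(1 - 1/p) = (p+1)/(p-1)"
    proof -
      fix p :: real assume p: "p > 1"
      hence "p \<noteq> 0" "p - 1 \<noteq> 0" by auto
      thus "(1 + 1/p)/(1 - 1/p) = (p+1)/(p-1)" by (simp add: field_simps)
    qed
    have e1: "(1 + 1/(a*b))/(1 - 1/(a*b)) = (a*b+1)/(a*b-1)" using gen[OF ab] .
    have "(a*b+1)*a = b*(a*b-1)" using rel2 by (simp add: algebra_simps)
    hence e2: "(a*b+1)/(a*b-1) = b/a" using ab a0 by (subst frac_eq_eq) auto
    show ?thesis unfolding X e1 e2 ..
  qed
  hence "artanh (XX u) = ln (b/a) / 2" by (simp add: artanh_def)
  also have "\<dots> = (v - u)/2" using a0 b0 by (simp add: ln_div a_def b_def)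
  finally show "artanh (XX u) = (arsinh (cosh u) - u) / 2" by (simp add: v_def)
qed

lemma arsinh_cosh_deriv [derivative_intros]:
  "((\<lambda>u. arsinh (cosh u)) has_field_derivative (sinh u / sqrt ((cosh u)^2 + 1))) (at u within S)"
proof -
  have "((\<lambda>u. arsinh (cosh u)) has_field_derivative (1/sqrt((cosh u)^2+1)) * (sinh u * 1)) (at u within S)"
    by (rule DERIV_chain2[OF arsinh_real_has_field_derivative has_field_derivative_cosh[OF DERIV_ident]])
  thus ?thesis by simp
qed

lemma arsinh_cosh_gt: "0 \<le> (u::real) \<Longrightarrow> u < arsinh (cosh u)"
proof -
  assume "0 \<le> u"
  have "sinh u < cosh u" by (simp add: sinh_less_cosh_real)
  hence "arsinh (sinh u) < arsinh (cosh u)" by simp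
  thus ?thesis by (simp add: arsinh_sinh_real)
qed

definition FF :: "real \<Rightarrow> real" where
  "FF u = - (chi (XX u) + (arsinh (cosh u) - u)^2 / 4)"

lemma FF_deriv:
  assumes "0 \<le> u"
  shows "(FF has_field_derivative (arsinh (cosh u) - u)) (at u within S)"
proof -
  note XF = XX_facts[OF assms]
  have g: "- u < arsinh (cosh u)" using arsinh_cosh_gt[OF assms] assms by simp
  have D: "(FF has_field_derivative
     (- (artanh (exp (- u - arsinh (cosh u))) * (- 1 - sinh u / sqrt ((cosh u)\<^sup>2 + 1))) -
     (arsinh (cosh u) - u) * (sinh u / sqrt ((cosh u)\<^sup>2 + 1) - 1) / 2)) (at u within S)"
    unfolding FF_def[abs_def] XX_def using assms g by (auto intro!: derivative_eq_intros)
  have A: "artanh (exp (- u - arsinh (cosh u))) = (arsinh (cosh u) - u) / 2"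
    using XF(3) by (simp add: XX_def)
  have "(- (artanh (exp (- u - arsinh (cosh u))) * (- 1 - sinh u / sqrt ((cosh u)\<^sup>2 + 1))) -
     (arsinh (cosh u) - u) * (sinh u / sqrt ((cosh u)\<^sup>2 + 1) - 1) / 2) = arsinh (cosh u) - u"
  proof -
    have alg: "\<And>p q::real. - ((q/2) * (-1 - p)) - q*(p - 1)/2 = q" by (simp add: field_simps)
    show ?thesis unfolding A by (rule alg)
  qed
  with D show ?thesis by simp
qed

lemma XX_tendsto: "(XX \<longlongrightarrow> 0) at_top"
proof (rule tendsto_sandwich)
  show "\<forall>\<^sub>F u in at_top. (\<lambda>_. 0) u \<le> XX u" by (simp add: XX_def)
  show "\<forall>\<^sub>F u in at_top. XX u \<le> exp (-u)"
  proof (rule eventually_mono[OF eventually_ge_at_top[of 0]])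
    fix u :: real assume u: "0 \<le> u"
    have "0 \<le> arsinh (cosh u)" using arsinh_cosh_gt[OF u] u by linarith
    thus "XX u \<le> exp (-u)" by (simp add: XX_def)
  qed
  show "((\<lambda>_. 0::real) \<longlongrightarrow> 0) at_top" by simp
  show "((\<lambda>u::real. exp (-u)) \<longlongrightarrow> 0) at_top" by real_asymp
qed

lemma FF_tendsto: "(FF \<longlongrightarrow> 0) at_top"
proof -
  have ev: "\<forall>\<^sub>F u in at_top. XX u \<in> {-1..1}"
    by (rule eventually_mono[OF eventually_ge_at_top[of 0]]) (use XX_facts in \<open>auto simp: less_imp_le intro: order_trans[of _ 0]\<close>)
  have c: "((\<lambda>u. chi (XX u)) \<longlongrightarrow> chi 0) at_top"
    by (rule continuous_on_tendsto_compose[OF chi_cont XX_tendsto]) (use ev in auto)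
  have a: "((\<lambda>u. artanh (XX u)) \<longlongrightarrow> artanh 0) at_top"
    by (rule tendsto_artanh[OF XX_tendsto]) auto
  have "((\<lambda>u. - (chi (XX u) + (2 * artanh (XX u))^2 / 4)) \<longlongrightarrow> - (chi 0 + (2 * artanh 0)^2 / 4)) at_top"
    by (intro tendsto_intros c a) (auto intro: XX_tendsto)
  hence L: "((\<lambda>u. - (chi (XX u) + (2 * artanh (XX u))^2 / 4)) \<longlongrightarrow> 0) at_top"
    by (simp add: chi_0)
  have "\<forall>\<^sub>F u in at_top. - (chi (XX u) + (2 * artanh (XX u))^2 / 4) = FF u"
  proof (rule eventually_mono[OF eventually_ge_at_top[of 0]])
    fix u :: real assume "0 \<le> u"
    hence "2 * artanh (XX u) = arsinh (cosh u) - u" using XX_facts(3)[of u] by simp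
    thus "- (chi (XX u) + (2 * artanh (XX u))^2 / 4) = FF u" by (simp add: FF_def)
  qed
  from Lim_transform_eventually[OF L this] show ?thesis .
qed

lemma value_at_0: "chi (XX 0) + (arsinh 1)^2 / 4 = pi^2/16"
proof -
  define x0 where "x0 = XX 0"
  have x0: "0 < x0" "x0 < 1" "artanh x0 = arsinh 1 / 2" using XX_facts[of 0] by (auto simp: x0_def)
  have lnx0: "ln x0 = - arsinh 1" by (simp add: x0_def XX_def)
  define b :: real where "b = exp (arsinh 1)"
  have b0: "b > 0" by (simp add: b_def)
  have xb: "x0 = 1/b" by (simp add: x0_def XX_def b_def exp_minus field_simps)
  have "sinh (arsinh (1::real)) = 1" by simp
  hence "(b - 1/b) / 2 = 1" by (simp add: sinh_def b_def exp_minus field_simps)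
  hence bb: "b*b - 1 = 2*b" using b0 by (simp add: field_simps)
  have "1 - x0 = x0 * (1 + x0)" unfolding xb using b0 bb by (simp add: field_simps)
  hence fix0: "(1 - x0)/(1 + x0) = x0" using x0 by (simp add: field_simps)
  have "chi ((1-x0)/(1+x0)) + chi x0 - ln x0 * artanh x0 = pi^2/8" by (rule landen[OF x0(1,2)])
  hence "2 * chi x0 + (arsinh 1)^2 / 2 = pi^2/8" unfolding fix0 lnx0 x0(3) by (simp add: power2_eq_square)
  thus ?thesis unfolding x0_def[symmetric] by simp
qed

theorem theorem1:
  shows "((\<lambda>u::real. arsinh (cosh u) - u) has_integral (pi\<^sup>2 / 16)) {0..}"
proof (rule has_integral_to_inf)
  show "(\<lambda>u::real. arsinh (cosh u) - u) integrable_on {0..y}" for y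
    by (rule integrable_continuous_interval) (intro continuous_intros)
  show "0 \<le> arsinh (cosh u) - u" if "0 \<le> u" for u :: real
    using arsinh_cosh_gt[OF that] by simp
  have FTC: "((\<lambda>u::real. arsinh (cosh u) - u) has_integral (FF y - FF 0)) {0..y}" if "0 \<le> y" for y
  proof (rule fundamental_theorem_of_calculus[OF that])
    fix x assume "x \<in> {0..y}"
    hence "0 \<le> x" by simp
    from FF_deriv[OF this] show "(FF has_vector_derivative (arsinh (cosh x) - x)) (at x within {0..y})"
      by (simp add: has_real_derivative_iff_has_vector_derivative)
  qed
  have ev: "\<forall>\<^sub>F y in at_top. FF y - FF 0 = integral {0..y} (\<lambda>u::real. arsinh (cosh u) - u)"
    by (rule eventually_mono[OF eventually_ge_at_top[of 0]]) (use FTC in \<open>metis integral_unique\<close>)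
  have T0: "((\<lambda>y. FF y - FF 0) \<longlongrightarrow> 0 - FF 0) at_top"
    by (intro tendsto_intros FF_tendsto)
  have v: "0 - FF 0 = pi^2/16" using value_at_0 by (simp add: FF_def)
  have T: "((\<lambda>y. FF y - FF 0) \<longlongrightarrow> pi\<^sup>2 / 16) at_top" using T0 unfolding v .
  show "((\<lambda>y. integral {0..y} (\<lambda>u::real. arsinh (cosh u) - u)) \<longlongrightarrow> pi\<^sup>2 / 16) at_top"
    by (rule Lim_transform_eventually[OF T ev])
qed


end
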